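(* In the setting of the context, Axiom (P3) holds for $\{d_a\mid a\in C\}$ with any $\theta\ge4\delta$: for any $b,c\in C$ the set $\{a\in C\setminus\{b,c\}: d_a(b,c)>\theta\}$ is finite.
   Context: $X$ is a $\delta$-hyperbolic geodesic metric space ($\delta>0$, every geodesic triangle $\delta$-thin). $G$ acts on $X$ by isometries and $\mathcal{C}=(C,\{G_c\})$ is a $\rho$-separated fairly rotating family with $\rho\ge20\delta$ (i.e. $C\subseteq X$ is $G$-invariant, $G_c$ fixes $c$, $G_{gc}=gG_cg^{-1}$, distinct points of $C$ are at distance $\ge\rho$, and for $c\in C$, $g\in G_c\setminus\{1\}$, $x\in C\setminus\{c\}$ some geodesic from $x$ to $gx$ meets the closed $1$-ball about $c$). Fix $2+2\delta\le R\le\frac\rho2-3\delta$; $B_r(p)$ denotes the open ball. For $p\in C$, $S_p=\{x:d(x,p)=R\}$ with metric $d_{S_p}(x,y)=$ infimum of lengths of paths from $x$ to $y$ in $X\setminus B_R(p)$ (possibly $\infty$). For $x\in C\setminus\{p\}$, $\pi_p(x)\subseteq S_p$ is the set of points where geodesics $[p,x]$ meet $S_p$, and $d_p(x,y)=\operatorname{diam}_{S_p}(\pi_p(x)\cup\pi_p(y))$. *)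

theory Defs
  imports "HOL-Analysis.Analysis" "HOL-Algebra.Group_Action" "HOL-Library.Extended_Real"
begin

definition geodesic_path :: "(real \<Rightarrow> 'a::metric_space) \<Rightarrow> 'a \<Rightarrow> 'a \<Rightarrow> bool" where
  "geodesic_path \<gamma> x y \<longleftrightarrow> \<gamma> 0 = x \<and> \<gamma> (dist x y) = y \<and>
     (\<forall>s\<in>{0..dist x y}. \<forall>t\<in>{0..dist x y}. dist (\<gamma> s) (\<gamma> t) = \<bar>s - t\<bar>)"

definition geod_seg :: "'a::metric_space \<Rightarrow> 'a \<Rightarrow> 'a set \<Rightarrow> bool" where
  "geod_seg x y S \<longleftrightarrow> (\<exists>\<gamma>. geodesic_path \<gamma> x y \<and> S = \<gamma> ` {0..dist x y})"

definition geodesic_space :: "'a::metric_space itself \<Rightarrow> bool" where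
  "geodesic_space _ \<longleftrightarrow> (\<forall>x y::'a. \<exists>\<gamma>. geodesic_path \<gamma> x y)"

definition gromov_product :: "'a::metric_space \<Rightarrow> 'a \<Rightarrow> 'a \<Rightarrow> real" where
  "gromov_product y z x = (dist x y + dist x z - dist y z) / 2"

(* tripod condition at vertex x, for sides A = [x,y] and B = [x,z] *)
definition thin_at :: "real \<Rightarrow> 'a::metric_space \<Rightarrow> 'a \<Rightarrow> 'a \<Rightarrow> 'a set \<Rightarrow> 'a set \<Rightarrow> bool" where
  "thin_at \<delta> x y z A B \<longleftrightarrow> (\<forall>p\<in>A. \<forall>q\<in>B.
      dist x p = dist x q \<and> dist x p \<le> gromov_product y z x \<longrightarrow> dist p q \<le> \<delta>)"

definition thin_triangle :: "real \<Rightarrow> 'a::metric_space \<Rightarrow> 'a \<Rightarrow> 'a \<Rightarrow> 'a set \<Rightarrow> 'a set \<Rightarrow> 'a set \<Rightarrow> bool" where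
  "thin_triangle \<delta> x y z Sxy Syz Szx \<longleftrightarrow>
     thin_at \<delta> x y z Sxy Szx \<and> thin_at \<delta> y z x Syz Sxy \<and> thin_at \<delta> z x y Szx Syz"

definition hyperbolic_geodesic :: "'a::metric_space itself \<Rightarrow> real \<Rightarrow> bool" where
  "hyperbolic_geodesic T \<delta> \<longleftrightarrow> geodesic_space T \<and>
     (\<forall>x y z::'a. \<forall>A B D. geod_seg x y A \<and> geod_seg y z B \<and> geod_seg z x D \<longrightarrow>
        thin_triangle \<delta> x y z A B D)"

definition isometric_action :: "('g, 'b) monoid_scheme \<Rightarrow> ('g \<Rightarrow> 'a::metric_space \<Rightarrow> 'a) \<Rightarrow> bool" where
  "isometric_action G \<phi> \<longleftrightarrow> group G \<and> group_action G UNIV \<phi> \<and>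
     (\<forall>g\<in>carrier G. \<forall>x y. dist (\<phi> g x) (\<phi> g y) = dist x y)"

definition fairly_rotating_family ::
  "('g, 'b) monoid_scheme \<Rightarrow> ('g \<Rightarrow> 'a::metric_space \<Rightarrow> 'a) \<Rightarrow> real \<Rightarrow> 'a set \<Rightarrow> ('a \<Rightarrow> 'g set) \<Rightarrow> bool" where
  "fairly_rotating_family G \<phi> \<rho> C Gc \<longleftrightarrow>
     (\<forall>g\<in>carrier G. \<forall>c\<in>C. \<phi> g c \<in> C) \<and>
     (\<forall>c\<in>C. subgroup (Gc c) G) \<and>
     (\<forall>c\<in>C. \<forall>g\<in>Gc c. \<phi> g c = c) \<and>
     (\<forall>g\<in>carrier G. \<forall>c\<in>C. Gc (\<phi> g c) = (\<lambda>h. g \<otimes>\<^bsub>G\<^esub> h \<otimes>\<^bsub>G\<^esub> inv\<^bsub>G\<^esub> g) ` Gc c) \<and>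
     (\<forall>c\<in>C. \<forall>c'\<in>C. c \<noteq> c' \<longrightarrow> dist c c' \<ge> \<rho>) \<and>
     (\<forall>c\<in>C. \<forall>g\<in>Gc c - {\<one>\<^bsub>G\<^esub>}. \<forall>x\<in>C - {c}.
        \<exists>S. geod_seg x (\<phi> g x) S \<and> S \<inter> cball c 1 \<noteq> {})"

definition path_length :: "(real \<Rightarrow> 'a::metric_space) \<Rightarrow> ereal" where
  "path_length \<gamma> = (SUP (n, t) \<in> {(n::nat, t::nat \<Rightarrow> real). t 0 = 0 \<and> t n = 1 \<and>
        (\<forall>i<n. t i \<le> t (Suc i))}.
      ereal (\<Sum>i<n. dist (\<gamma> (t i)) (\<gamma> (t (Suc i)))))"

(* induced path metric on S_p: infimum of lengths of paths in X \ B_R(p) (possibly infinity) *)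
definition sphere_dist :: "'a::metric_space \<Rightarrow> real \<Rightarrow> 'a \<Rightarrow> 'a \<Rightarrow> ereal" where
  "sphere_dist p R x y = (INF \<gamma> \<in> {\<gamma>. path \<gamma> \<and> pathstart \<gamma> = x \<and> pathfinish \<gamma> = y \<and>
        path_image \<gamma> \<subseteq> UNIV - ball p R}. path_length \<gamma>)"

definition proj :: "'a::metric_space \<Rightarrow> real \<Rightarrow> 'a \<Rightarrow> 'a set" where
  "proj p R x = {z. dist p z = R \<and> (\<exists>S. geod_seg p x S \<and> z \<in> S)}"

definition proj_dist :: "'a::metric_space \<Rightarrow> real \<Rightarrow> 'a \<Rightarrow> 'a \<Rightarrow> ereal" where
  "proj_dist p R x y = (SUP (u, v) \<in> (proj p R x \<union> proj p R y) \<times> (proj p R x \<union> proj p R y).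
      sphere_dist p R u v)"

end

theory Submission
  imports Defs
begin

lemma geo_dist:
  assumes "geodesic_path \<gamma> x y" "s \<in> {0..dist x y}" "t \<in> {0..dist x y}"
  shows "dist (\<gamma> s) (\<gamma> t) = \<bar>s - t\<bar>"
  using assms unfolding geodesic_path_def by blast

lemma geo_start:
  assumes "geodesic_path \<gamma> x y" "s \<in> {0..dist x y}"
  shows "dist x (\<gamma> s) = s"
proof -
  have "dist (\<gamma> 0) (\<gamma> s) = \<bar>0 - s\<bar>" using geo_dist[OF assms(1) _ assms(2)] zero_le_dist[of x y] by simp
  moreover have "\<gamma> 0 = x" using assms(1) unfolding geodesic_path_def by simp
  ultimately show ?thesis using assms(2) by simp
qed

lemma geo_end:
  assumes "geodesic_path \<gamma> x y" "s \<in> {0..dist x y}"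
  shows "dist (\<gamma> s) y = dist x y - s"
proof -
  have "dist (\<gamma> s) (\<gamma> (dist x y)) = \<bar>s - dist x y\<bar>" using geo_dist[OF assms(1) assms(2)] zero_le_dist[of x y] by simp
  moreover have "\<gamma> (dist x y) = y" using assms(1) unfolding geodesic_path_def by simp
  ultimately show ?thesis using assms(2) by simp
qed

lemma geo_rev:
  assumes "geodesic_path \<gamma> x y"
  shows "geodesic_path (\<lambda>s. \<gamma> (dist x y - s)) y x"
    and "(\<lambda>s. \<gamma> (dist x y - s)) ` {0..dist y x} = \<gamma> ` {0..dist x y}"
proof -
  show "geodesic_path (\<lambda>s. \<gamma> (dist x y - s)) y x"
    using assms unfolding geodesic_path_def by (auto simp: dist_commute)
  show "(\<lambda>s. \<gamma> (dist x y - s)) ` {0..dist y x} = \<gamma> ` {0..dist x y}"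
  proof
    show "(\<lambda>s. \<gamma> (dist x y - s)) ` {0..dist y x} \<subseteq> \<gamma> ` {0..dist x y}"
      by (auto simp: dist_commute)
    show "\<gamma> ` {0..dist x y} \<subseteq> (\<lambda>s. \<gamma> (dist x y - s)) ` {0..dist y x}"
    proof
      fix w assume "w \<in> \<gamma> ` {0..dist x y}"
      then obtain s where "s \<in> {0..dist x y}" "w = \<gamma> s" by auto
      then show "w \<in> (\<lambda>s. \<gamma> (dist x y - s)) ` {0..dist y x}"
        by (intro image_eqI[where x="dist x y - s"]) (auto simp: dist_commute)
    qed
  qed
qed

lemma geod_seg_rev: "geod_seg x y S \<Longrightarrow> geod_seg y x S"
  unfolding geod_seg_def using geo_rev by metis

lemma lip_join:
  fixes f :: "real \<Rightarrow> 'a::metric_space"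
  assumes "x \<le> m" "m \<le> y"
    and "\<forall>s\<in>{x..m}. \<forall>t\<in>{x..m}. dist (f s) (f t) \<le> L * \<bar>s - t\<bar>"
    and "\<forall>s\<in>{m..y}. \<forall>t\<in>{m..y}. dist (f s) (f t) \<le> L * \<bar>s - t\<bar>"
  shows "\<forall>s\<in>{x..y}. \<forall>t\<in>{x..y}. dist (f s) (f t) \<le> L * \<bar>s - t\<bar>"
proof (intro ballI)
  fix s t assume s: "s \<in> {x..y}" and t: "t \<in> {x..y}"
  have key: "dist (f s) (f t) \<le> L * \<bar>s - t\<bar>" if "s \<le> m" "m \<le> t" "s \<in> {x..y}" "t \<in> {x..y}" for s t
  proof -
    have "dist (f s) (f t) \<le> dist (f s) (f m) + dist (f m) (f t)" by (rule dist_triangle)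
    also have "\<dots> \<le> L * \<bar>s - m\<bar> + L * \<bar>m - t\<bar>"
    proof (rule add_mono)
      show "dist (f s) (f m) \<le> L * \<bar>s - m\<bar>" using assms(3)[rule_format, of s m] that assms(1) by auto
      show "dist (f m) (f t) \<le> L * \<bar>m - t\<bar>" using assms(4)[rule_format, of m t] that assms(2) by auto
    qed
    also have "\<dots> = L * \<bar>s - t\<bar>" using that by (simp add: algebra_simps)
    finally show ?thesis .
  qed
  show "dist (f s) (f t) \<le> L * \<bar>s - t\<bar>"
  proof (cases "s \<le> m")
    case True
    show ?thesis
    proof (cases "t \<le> m")
      case True with \<open>s \<le> m\<close> s t assms(3) show ?thesis by auto
    next
      case False then show ?thesis using key[of s t] True s t by auto
    qed
  next
    case False
    show ?thesis
    proof (cases "t \<le> m")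
      case True then show ?thesis using key[of t s] False s t by (auto simp: dist_commute abs_minus_commute)
    next
      case F2: False with False s t assms(4) show ?thesis by auto
    qed
  qed
qed

lemma path_length_le:
  assumes "\<And>s t. s \<in> {0..1} \<Longrightarrow> t \<in> {0..1} \<Longrightarrow> dist (\<gamma> s) (\<gamma> t) \<le> L * \<bar>s - t\<bar>"
    and "L \<ge> 0"
  shows "path_length \<gamma> \<le> ereal L"
  unfolding path_length_def
proof (rule SUP_least, clarsimp)
  fix n :: nat and t :: "nat \<Rightarrow> real"
  assume t0: "t 0 = 0" and tn: "t n = 1" and mono: "\<forall>i<n. t i \<le> t (Suc i)"
  have mo: "t i \<le> t j" if "i \<le> j" "j \<le> n" for i j
    using that
  proof (induction j rule: dec_induct)
    case base then show ?case by simp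
  next
    case (step k)
    then have "k < n" by simp
    then have "t k \<le> t (Suc k)" using mono by simp
    with step show ?case by simp
  qed
  have rng: "t i \<in> {0..1}" if "i \<le> n" for i
    using mo[of 0 i] mo[of i n] that t0 tn by auto
  have "(\<Sum>i<n. dist (\<gamma> (t i)) (\<gamma> (t (Suc i)))) \<le> (\<Sum>i<n. L * (t (Suc i) - t i))"
  proof (rule sum_mono)
    fix i assume "i \<in> {..<n}"
    then have "t i \<le> t (Suc i)" "t i \<in> {0..1}" "t (Suc i) \<in> {0..1}" using mono rng by auto
    then show "dist (\<gamma> (t i)) (\<gamma> (t (Suc i))) \<le> L * (t (Suc i) - t i)"
      using assms(1)[of "t i" "t (Suc i)"] by auto
  qed
  also have "\<dots> = L * (t n - t 0)"
    by (simp add: sum_distrib_left[symmetric] sum_lessThan_telescope)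
  finally show "(\<Sum>i<n. dist (\<gamma> (t i)) (\<gamma> (t (Suc i)))) \<le> L" using t0 tn by simp
qed



lemma gromov_le: "gromov_product y z a \<le> dist a y"
  unfolding gromov_product_def using dist_triangle[of a z y] by (simp add: dist_commute)

lemma sphere_dist_small:
  fixes a y z u v :: "'a::metric_space"
  assumes hyp: "hyperbolic_geodesic TYPE('a) \<delta>" and dpos: "\<delta> > 0" and R0: "R \<ge> 0"
    and u: "u \<in> proj a R y" and v: "v \<in> proj a R z"
    and gp: "gromov_product y z a \<ge> R + \<delta>"
  shows "sphere_dist a R u v \<le> ereal (3*\<delta>)"
proof -
  have geo: "geodesic_space TYPE('a)" and thin: "\<And>(x::'a) y z A B D. geod_seg x y A \<Longrightarrow> geod_seg y z B
     \<Longrightarrow> geod_seg z x D \<Longrightarrow> thin_triangle \<delta> x y z A B D"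
    using hyp unfolding hyperbolic_geodesic_def by blast+
  have dy: "dist a y \<ge> R + \<delta>" using gromov_le[of y z a] gp by simp
  have dz: "dist a z \<ge> R + \<delta>" using gromov_le[of z y a] gp
    by (simp add: gromov_product_def dist_commute add.commute)
  from u obtain S where uR: "dist a u = R" and S: "geod_seg a y S" "u \<in> S"
    unfolding proj_def by blast
  from S obtain \<gamma> where \<gamma>: "geodesic_path \<gamma> a y" and Sd: "S = \<gamma> ` {0..dist a y}"
    unfolding geod_seg_def by blast
  from S(2) Sd obtain s where s: "s \<in> {0..dist a y}" "u = \<gamma> s" by auto
  have "s = R" using geo_start[OF \<gamma> s(1)] s(2) uR by simp
  with s have u\<gamma>: "u = \<gamma> R" by simp
  from v obtain T where vR: "dist a v = R" and T: "geod_seg a z T" "v \<in> T"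
    unfolding proj_def by blast
  from T obtain \<eta> where \<eta>: "geodesic_path \<eta> a z" and Td: "T = \<eta> ` {0..dist a z}"
    unfolding geod_seg_def by blast
  from T(2) Td obtain s' where s': "s' \<in> {0..dist a z}" "v = \<eta> s'" by auto
  have "s' = R" using geo_start[OF \<eta> s'(1)] s'(2) vR by simp
  with s' have v\<eta>: "v = \<eta> R" by simp
  obtain \<beta> where \<beta>: "geodesic_path \<beta> y z" using geo unfolding geodesic_space_def by blast
  have B: "geod_seg y z (\<beta> ` {0..dist y z})" using \<beta> unfolding geod_seg_def by blast
  have T': "geod_seg z a T" using geod_seg_rev[OF T(1)] .
  have "thin_triangle \<delta> a y z S (\<beta> ` {0..dist y z}) T" using thin[OF S(1) B T'] .
  then have th: "thin_at \<delta> a y z S T" unfolding thin_triangle_def by blast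
  define p where "p = \<gamma> (R + \<delta>)"
  define q where "q = \<eta> (R + \<delta>)"
  have Rdy: "R + \<delta> \<in> {0..dist a y}" using dy R0 dpos by auto
  have Rdz: "R + \<delta> \<in> {0..dist a z}" using dz R0 dpos by auto
  have pS: "p \<in> S" using Sd Rdy p_def by auto
  have qT: "q \<in> T" using Td Rdz q_def by auto
  have ap: "dist a p = R + \<delta>" using geo_start[OF \<gamma> Rdy] p_def by simp
  have aq: "dist a q = R + \<delta>" using geo_start[OF \<eta> Rdz] q_def by simp
  have pq: "dist p q \<le> \<delta>" using th pS qT ap aq gp unfolding thin_at_def by auto
  obtain \<mu> where \<mu>: "geodesic_path \<mu> p q" using geo unfolding geodesic_space_def by blast
  define e where "e = dist p q"
  have e0: "e \<ge> 0" and ed: "e \<le> \<delta>" using pq e_def by auto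
  define P where "P = (\<lambda>t::real. if t \<le> 1/3 then \<gamma> (R + 3*\<delta>*t)
      else if t \<le> 2/3 then \<mu> (3*e*(t - 1/3)) else \<eta> (R + 3*\<delta>*(1 - t)))"
  have P1: "P t = \<gamma> (R + 3*\<delta>*t)" if "t \<in> {0..1/3}" for t
    using that P_def by auto
  have P2: "P t = \<mu> (3*e*(t - 1/3))" if "t \<in> {1/3..2/3}" for t
  proof (cases "t = 1/3")
    case True
    have "\<mu> 0 = p" using \<mu> unfolding geodesic_path_def by simp
    then show ?thesis unfolding True P_def p_def by simp
  next
    case False then show ?thesis using that P_def by auto
  qed
  have P3: "P t = \<eta> (R + 3*\<delta>*(1 - t))" if "t \<in> {2/3..1}" for t
  proof (cases "t = 2/3")
    case True
    have "\<mu> e = q" using \<mu> e_def unfolding geodesic_path_def by simp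
    then show ?thesis unfolding True P_def q_def by simp
  next
    case False then show ?thesis using that P_def by auto
  qed
  have r1: "R + 3*\<delta>*t \<in> {0..dist a y}" if "t \<in> {0..1/3}" for t
  proof -
    have "3*\<delta>*t \<le> 3*\<delta>*(1/3)" using that dpos by (intro mult_left_mono) auto
    moreover have "0 \<le> 3*\<delta>*t" using that dpos by simp
    moreover have "3*\<delta>*(1/3) = \<delta>" by simp
    ultimately show ?thesis using R0 dy by auto
  qed
  have r3: "R + 3*\<delta>*(1-t) \<in> {0..dist a z}" if "t \<in> {2/3..1}" for t
  proof -
    have "3*\<delta>*(1-t) \<le> 3*\<delta>*(1/3)" using that dpos by (intro mult_left_mono) auto
    moreover have "0 \<le> 3*\<delta>*(1-t)" using that dpos by simp
    moreover have "3*\<delta>*(1/3) = \<delta>" by simp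
    ultimately show ?thesis using R0 dz by auto
  qed
  have r2: "3*e*(t - 1/3) \<in> {0..dist p q}" if "t \<in> {1/3..2/3}" for t
  proof -
    have "3*e*(t-1/3) \<le> 3*e*(1/3)" using that e0 by (intro mult_left_mono) auto
    moreover have "0 \<le> 3*e*(t-1/3)" using that e0 by simp
    moreover have "3*e*(1/3) = e" by simp
    ultimately show ?thesis using e_def by auto
  qed
  have L1: "\<forall>w\<in>{0..1/3}. \<forall>t\<in>{0..1/3}. dist (P w) (P t) \<le> 3*\<delta> * \<bar>w - t\<bar>"
  proof (intro ballI)
    fix w t :: real assume st: "w \<in> {0..1/3}" "t \<in> {0..1/3}"
    have "dist (P w) (P t) = abs ((R + 3*\<delta>* w) - (R + 3*\<delta>*t))"
      using P1 st geo_dist[OF \<gamma> r1 r1] by simp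
    also have "\<dots> = 3*\<delta> * \<bar>w - t\<bar>" using dpos by (simp add: abs_mult right_diff_distrib[symmetric])
    finally show "dist (P w) (P t) \<le> 3*\<delta> * \<bar>w - t\<bar>" by simp
  qed
  have L2: "\<forall>w\<in>{1/3..2/3}. \<forall>t\<in>{1/3..2/3}. dist (P w) (P t) \<le> 3*\<delta> * \<bar>w - t\<bar>"
  proof (intro ballI)
    fix w t :: real assume st: "w \<in> {1/3..2/3}" "t \<in> {1/3..2/3}"
    have "dist (P w) (P t) = abs (3*e*(w - 1/3) - 3*e*(t - 1/3))"
      using P2 st geo_dist[OF \<mu> r2 r2] by simp
    also have "\<dots> = 3*e * \<bar>w - t\<bar>" using e0 by (simp add: abs_mult right_diff_distrib[symmetric])
    also have "\<dots> \<le> 3*\<delta> * \<bar>w - t\<bar>" using ed by (intro mult_right_mono) auto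
    finally show "dist (P w) (P t) \<le> 3*\<delta> * \<bar>w - t\<bar>" .
  qed
  have L3: "\<forall>w\<in>{2/3..1}. \<forall>t\<in>{2/3..1}. dist (P w) (P t) \<le> 3*\<delta> * \<bar>w - t\<bar>"
  proof (intro ballI)
    fix w t :: real assume st: "w \<in> {2/3..1}" "t \<in> {2/3..1}"
    have "dist (P w) (P t) = abs ((R + 3*\<delta>* (1-w)) - (R + 3*\<delta>*(1-t)))"
      using P3 st geo_dist[OF \<eta> r3 r3] by simp
    also have "\<dots> = 3*\<delta> * \<bar>w - t\<bar>" using dpos
      by (simp add: abs_mult right_diff_distrib[symmetric] abs_minus_commute)
    finally show "dist (P w) (P t) \<le> 3*\<delta> * \<bar>w - t\<bar>" by simp
  qed
  have L12: "\<forall>s\<in>{0..2/3}. \<forall>t\<in>{0..2/3}. dist (P s) (P t) \<le> 3*\<delta> * \<bar>s - t\<bar>"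
    by (rule lip_join[OF _ _ L1 L2]) auto
  have L: "\<forall>s\<in>{0..1}. \<forall>t\<in>{0..1}. dist (P s) (P t) \<le> 3*\<delta> * \<bar>s - t\<bar>"
    by (rule lip_join[OF _ _ L12 L3]) auto
  have pathP: "path P"
    unfolding path_def
    by (rule lipschitz_on_continuous_on[where L="3*\<delta>"])
       (use L dpos in \<open>auto simp: lipschitz_on_def dist_real_def\<close>)
  have startP: "pathstart P = u" using P1[of 0] u\<gamma> by (simp add: pathstart_def)
  have finP: "pathfinish P = v" using P3[of 1] v\<eta> by (simp add: pathfinish_def)
  have far: "dist a (P t) \<ge> R" if tin: "t \<in> {0..1}" for t
  proof -
    consider "t \<in> {0..1/3}" | "t \<in> {1/3..2/3}" | "t \<in> {2/3..1}" using tin by fastforce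
    then show ?thesis
    proof cases
      case 1 then show ?thesis using P1 geo_start[OF \<gamma> r1[OF 1]] dpos
        by (simp add: zero_le_mult_iff)
    next
      case 3 then show ?thesis using P3 geo_start[OF \<eta> r3[OF 3]] dpos
        by (simp add: zero_le_mult_iff)
    next
      case 2
      have "dist p (\<mu> (3*e*(t - 1/3))) = 3*e*(t - 1/3)" using geo_start[OF \<mu> r2[OF 2]] .
      moreover have "3*e*(t - 1/3) \<le> \<delta>" using r2[OF 2] pq by auto
      moreover have "dist a p \<le> dist a (P t) + dist (P t) p" by (rule dist_triangle)
      ultimately show ?thesis using P2[OF 2] ap by (simp add: dist_commute)
    qed
  qed
  have imgP: "path_image P \<subseteq> UNIV - ball a R"
    using far by (fastforce simp: path_image_def ball_def not_less)
  have "sphere_dist a R u v \<le> path_length P"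
    unfolding sphere_dist_def using pathP startP finP imgP by (intro INF_lower) auto
  also have "\<dots> \<le> ereal (3*\<delta>)"
    using L dpos by (intro path_length_le) auto
  finally show ?thesis .
qed


lemma near_seg:
  fixes a b c :: "'a::metric_space"
  assumes hyp: "hyperbolic_geodesic TYPE('a) \<delta>"
    and \<beta>: "geodesic_path \<beta> b c"
  shows "\<exists>k\<in>\<beta> ` {0..dist b c}. dist a k \<le> gromov_product b c a + \<delta>"
proof -
  have geo: "geodesic_space TYPE('a)" and thin: "\<And>(x::'a) y z A B D. geod_seg x y A \<Longrightarrow> geod_seg y z B
     \<Longrightarrow> geod_seg z x D \<Longrightarrow> thin_triangle \<delta> x y z A B D"
    using hyp unfolding hyperbolic_geodesic_def by blast+
  obtain \<alpha> where \<alpha>: "geodesic_path \<alpha> b a" using geo unfolding geodesic_space_def by blast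
  obtain \<kappa> where \<kappa>: "geodesic_path \<kappa> c a" using geo unfolding geodesic_space_def by blast
  define Sab where "Sab = \<alpha> ` {0..dist b a}"
  define K where "K = \<beta> ` {0..dist b c}"
  have Sab: "geod_seg a b Sab" using geod_seg_rev \<alpha> Sab_def unfolding geod_seg_def by blast
  have K: "geod_seg b c K" using \<beta> K_def unfolding geod_seg_def by blast
  have Sca: "geod_seg c a (\<kappa> ` {0..dist c a})" using \<kappa> unfolding geod_seg_def by blast
  have "thin_triangle \<delta> a b c Sab K (\<kappa> ` {0..dist c a})" using thin[OF Sab K Sca] .
  then have th: "thin_at \<delta> b c a K Sab" unfolding thin_triangle_def by blast
  define g where "g = gromov_product c a b"
  have g0: "g \<ge> 0" using dist_triangle[of c a b] unfolding g_def gromov_product_def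
    by (simp add: dist_commute)
  have gc: "g \<le> dist b c" using dist_triangle[of b a c] unfolding g_def gromov_product_def
    by (simp add: dist_commute)
  have ga: "g \<le> dist b a" using dist_triangle[of b c a] unfolding g_def gromov_product_def
    by (simp add: dist_commute)
  define p where "p = \<beta> g"
  define q where "q = \<alpha> g"
  have pK: "p \<in> K" using g0 gc p_def K_def by auto
  have qS: "q \<in> Sab" using g0 ga q_def Sab_def by auto
  have bp: "dist b p = g" using geo_start[OF \<beta>] g0 gc p_def by simp
  have bq: "dist b q = g" using geo_start[OF \<alpha>] g0 ga q_def by simp
  have pq: "dist p q \<le> \<delta>" using th pK qS bp bq unfolding thin_at_def g_def by auto
  have aq: "dist q a = dist b a - g" using geo_end[OF \<alpha>] g0 ga q_def by simp
  have "dist a p \<le> dist a q + dist q p" by (rule dist_triangle)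
  also have "\<dots> \<le> gromov_product b c a + \<delta>"
    using aq pq unfolding g_def gromov_product_def by (simp add: dist_commute field_simps; linarith)
  finally show ?thesis using pK K_def by blast
qed

theorem lemma3p6:
  fixes G :: "('g, 'b) monoid_scheme" and \<phi> :: "'g \<Rightarrow> 'a::metric_space \<Rightarrow> 'a"
    and C :: "'a set" and Gc :: "'a \<Rightarrow> 'g set"
    and \<delta> \<rho> R \<theta> :: real
  assumes "\<delta> > 0"
    and "hyperbolic_geodesic TYPE('a) \<delta>"
    and "isometric_action G \<phi>"
    and "fairly_rotating_family G \<phi> \<rho> C Gc"
    and "\<rho> \<ge> 20 * \<delta>"
    and "2 + 2 * \<delta> \<le> R" and "R \<le> \<rho> / 2 - 3 * \<delta>"
    and "\<theta> \<ge> 4 * \<delta>"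
    and "b \<in> C" and "c \<in> C"
  shows "finite {a \<in> C - {b, c}. proj_dist a R b c > ereal \<theta>}"
proof -
  note dpos = assms(1) and hyp = assms(2)
  have sep: "\<And>x y. x \<in> C \<Longrightarrow> y \<in> C \<Longrightarrow> x \<noteq> y \<Longrightarrow> dist x y \<ge> \<rho>"
    using assms(4) unfolding fairly_rotating_family_def by blast
  have R0: "R \<ge> 0" using assms(6) dpos by simp
  have geo: "geodesic_space TYPE('a)" using hyp unfolding hyperbolic_geodesic_def by blast
  obtain \<beta> where \<beta>: "geodesic_path \<beta> b c" using geo unfolding geodesic_space_def by blast
  define K where "K = \<beta> ` {0..dist b c}"
  define A where "A = {a \<in> C - {b, c}. proj_dist a R b c > ereal \<theta>}"
  define D where "D = R + 2*\<delta>"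
  have near: "\<exists>k\<in>K. dist a k < D" if aA: "a \<in> A" for a
  proof -
    have aC: "a \<in> C" "a \<noteq> b" "a \<noteq> c" using aA A_def by auto
    have dab: "dist a b \<ge> R + \<delta>" using sep[OF aC(1) assms(9) aC(2)] assms(5,7) dpos by simp
    have dac: "dist a c \<ge> R + \<delta>" using sep[OF aC(1) assms(10) aC(3)] assms(5,7) dpos by simp
    have gp: "gromov_product b c a < R + \<delta>"
    proof (rule ccontr)
      assume "\<not> gromov_product b c a < R + \<delta>"
      then have g1: "gromov_product b c a \<ge> R + \<delta>" by simp
      have gg: "gromov_product y z a \<ge> R + \<delta>" if "y \<in> {b, c}" "z \<in> {b, c}" for y z
      proof -
        have sym: "gromov_product c b a = gromov_product b c a"
          unfolding gromov_product_def by (simp add: dist_commute algebra_simps)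
        have same: "gromov_product y y a = dist a y" for y
          unfolding gromov_product_def by simp
        show ?thesis using that g1 sym same dab dac by auto
      qed
      have "proj_dist a R b c \<le> ereal (3*\<delta>)"
        unfolding proj_dist_def
      proof (rule SUP_least, clarify)
        fix u v assume u: "u \<in> proj a R b \<union> proj a R c" and v: "v \<in> proj a R b \<union> proj a R c"
        from u obtain y where y: "y \<in> {b, c}" "u \<in> proj a R y" by auto
        from v obtain z where z: "z \<in> {b, c}" "v \<in> proj a R z" by auto
        show "sphere_dist a R u v \<le> ereal (3*\<delta>)"
          using sphere_dist_small[OF hyp dpos R0 y(2) z(2) gg[OF y(1) z(1)]] .
      qed
      also have "\<dots> \<le> ereal \<theta>" using assms(8) dpos by simp
      finally show False using aA A_def by auto
    qed
    obtain k where "k \<in> K" "dist a k \<le> gromov_product b c a + \<delta>"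
      using near_seg[OF hyp \<beta>] K_def by blast
    then show ?thesis using gp D_def by (intro bexI[of _ k]) auto
  qed
  have contK: "continuous_on {0..dist b c} \<beta>"
    by (rule lipschitz_on_continuous_on[where L=1])
       (use geo_dist[OF \<beta>] in \<open>auto simp: lipschitz_on_def dist_real_def\<close>)
  have "compact K" unfolding K_def by (rule compact_continuous_image[OF contK]) simp
  then have sc: "seq_compact K" by (rule compact_imp_seq_compact)
  define \<epsilon> where "\<epsilon> = (\<rho> - 2*D) / 2"
  have epos: "\<epsilon> > 0" using assms(5,7) dpos unfolding \<epsilon>_def D_def by simp
  obtain F where F: "finite F" "K \<subseteq> (\<Union>x\<in>F. ball x \<epsilon>)"
    using seq_compact_imp_totally_bounded[OF sc] epos by blast
  have ex: "\<exists>x\<in>F. \<exists>k. dist a k < D \<and> dist x k < \<epsilon>" if "a \<in> A" for a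
    using near[OF that] F(2) by (fastforce simp: ball_def)
  define f where "f a = (SOME x. x \<in> F \<and> (\<exists>k. dist a k < D \<and> dist x k < \<epsilon>))" for a
  have f: "f a \<in> F \<and> (\<exists>k. dist a k < D \<and> dist (f a) k < \<epsilon>)" if "a \<in> A" for a
    unfolding f_def using someI_ex[OF ex[OF that, unfolded Bex_def]] .
  have "inj_on f A"
  proof (rule inj_onI)
    fix a a' assume a: "a \<in> A" and a': "a' \<in> A" and eq: "f a = f a'"
    obtain k where k: "dist a k < D" "dist (f a) k < \<epsilon>" using f[OF a] by blast
    obtain k' where k': "dist a' k' < D" "dist (f a') k' < \<epsilon>" using f[OF a'] by blast
    have "dist a a' \<le> dist a k + dist k (f a) + dist (f a) k' + dist k' a'"
      using dist_triangle[of a a' k] dist_triangle[of k a' "f a"] dist_triangle[of "f a" a' k']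
      by (simp add: dist_commute)
    also have "\<dots> < \<rho>" using k k' eq unfolding \<epsilon>_def by (simp add: dist_commute)
    finally have lt: "dist a a' < \<rho>" .
    show "a = a'"
    proof (rule ccontr)
      assume "a \<noteq> a'"
      then show False using sep[of a a'] a a' A_def lt by auto
    qed
  qed
  moreover have "f ` A \<subseteq> F" using f by blast
  ultimately have "finite A" using F(1) by (metis finite_imageD finite_subset)
  then show ?thesis unfolding A_def .
qed

end
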